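(* Let $M$ be a retract-compatible Coxeter matrix over a finite set $S$ with $|S|\ge2$, and let $A_S$ be its associated Artin group. Then for every $x\in S$ there exists an ordinary retraction $\psi_x:A_S\to A_{S\setminus\{x\}}$ such that $\psi_x(x)\in S\setminus\{x\}$ (in particular $\psi_x(x)\neq 1$).
   Context: A Coxeter matrix over a finite set $S$ is a matrix $M=(m_{s,t})_{s,t\in S}$ with entries in $\mathbb{N}\cup\{\infty\}$, $m_{s,s}=1$, and $m_{s,t}=m_{t,s}\ge 2$ for $s\neq t$. Write $\Pi(s,t,m)$ for the alternating word $sts\cdots$ of length $m$. The Artin group is $A_S=\langle S\mid \Pi(s,t,m_{s,t})=\Pi(t,s,m_{s,t})$ for $s\neq t$, $m_{s,t}\neq\infty\rangle$. For $X\subseteq S$, $A_X$ is the subgroup generated by $X$. $M$ is retract-compatible if all its entries are finite odd numbers and for every triple $a,b,c\in S$ of pairwise distinct elements, up to permuting $a,b,c$, $m_{a,b}=m_{a,c}$ and $m_{b,c}$ divides $m_{a,b}$. A retraction $\varphi:A_S\to A_X$ (homomorphism restricting to the identity on $A_X$) is ordinary if $\varphi(x)=x$ for all $x\in X$ and $\varphi(y)\in X\cup\{1\}$ for all $y\in S\setminus X$. *)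

theory Defs
  imports "HOL-Algebra.Generated_Groups" "HOL-Library.Extended_Nat"
begin

definition coxeter_matrix :: "'a set \<Rightarrow> ('a \<Rightarrow> 'a \<Rightarrow> enat) \<Rightarrow> bool" where
  "coxeter_matrix S M \<longleftrightarrow>
     (\<forall>s\<in>S. M s s = 1) \<and>
     (\<forall>s\<in>S. \<forall>t\<in>S. s \<noteq> t \<longrightarrow> M s t = M t s \<and> M s t \<ge> 2)"

definition retract_compatible :: "'a set \<Rightarrow> ('a \<Rightarrow> 'a \<Rightarrow> enat) \<Rightarrow> bool" where
  "retract_compatible S M \<longleftrightarrow>
     (\<forall>s\<in>S. \<forall>t\<in>S. \<exists>n. M s t = enat n \<and> odd n) \<and>
     (\<forall>a\<in>S. \<forall>b\<in>S. \<forall>c\<in>S. a \<noteq> b \<and> a \<noteq> c \<and> b \<noteq> c \<longrightarrow>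
        (\<exists>a' b' c'. {a', b', c'} = {a, b, c} \<and>
           M a' b' = M a' c' \<and> the_enat (M b' c') dvd the_enat (M a' b')))"

text \<open>Signed letters: (True, s) is s, (False, s) is s inverse.\<close>
type_synonym 'a word = "(bool \<times> 'a) list"

definition words_on :: "'a set \<Rightarrow> 'a word \<Rightarrow> bool" where
  "words_on S w \<longleftrightarrow> snd ` set w \<subseteq> S"

fun alt_word :: "'a \<Rightarrow> 'a \<Rightarrow> nat \<Rightarrow> 'a word" where
  "alt_word s t 0 = []"
| "alt_word s t (Suc n) = (True, s) # alt_word t s n"

inductive artin_step :: "'a set \<Rightarrow> ('a \<Rightarrow> 'a \<Rightarrow> enat) \<Rightarrow> 'a word \<Rightarrow> 'a word \<Rightarrow> bool"
  for S M where
  cancel: "\<lbrakk>words_on S u; words_on S v; s \<in> S\<rbrakk> \<Longrightarrow>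
     artin_step S M (u @ [(b, s), (\<not> b, s)] @ v) (u @ v)"
| braid: "\<lbrakk>words_on S u; words_on S v; s \<in> S; t \<in> S; s \<noteq> t; M s t = enat m\<rbrakk> \<Longrightarrow>
     artin_step S M (u @ alt_word s t m @ v) (u @ alt_word t s m @ v)"

definition artin_equiv :: "'a set \<Rightarrow> ('a \<Rightarrow> 'a \<Rightarrow> enat) \<Rightarrow> 'a word \<Rightarrow> 'a word \<Rightarrow> bool" where
  "artin_equiv S M = equivclp (artin_step S M)"

definition artin_class :: "'a set \<Rightarrow> ('a \<Rightarrow> 'a \<Rightarrow> enat) \<Rightarrow> 'a word \<Rightarrow> 'a word set" where
  "artin_class S M w = {v. words_on S v \<and> artin_equiv S M w v}"

definition artin_group :: "'a set \<Rightarrow> ('a \<Rightarrow> 'a \<Rightarrow> enat) \<Rightarrow> 'a word set monoid" where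
  "artin_group S M =
     \<lparr> carrier = artin_class S M ` {w. words_on S w},
       mult = (\<lambda>A B. artin_class S M ((SOME u. u \<in> A) @ (SOME v. v \<in> B))),
       one = artin_class S M [] \<rparr>"

definition artin_gen :: "'a set \<Rightarrow> ('a \<Rightarrow> 'a \<Rightarrow> enat) \<Rightarrow> 'a \<Rightarrow> 'a word set" where
  "artin_gen S M s = artin_class S M [(True, s)]"

definition parabolic :: "'a set \<Rightarrow> ('a \<Rightarrow> 'a \<Rightarrow> enat) \<Rightarrow> 'a set \<Rightarrow> 'a word set set" where
  "parabolic S M X = generate (artin_group S M) (artin_gen S M ` X)"

definition retraction :: "'a set \<Rightarrow> ('a \<Rightarrow> 'a \<Rightarrow> enat) \<Rightarrow> 'a set \<Rightarrow> ('a word set \<Rightarrow> 'a word set) \<Rightarrow> bool" where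
  "retraction S M X \<phi> \<longleftrightarrow>
     \<phi> \<in> hom (artin_group S M) (artin_group S M) \<and>
     \<phi> ` carrier (artin_group S M) \<subseteq> parabolic S M X \<and>
     (\<forall>a\<in>parabolic S M X. \<phi> a = a)"

definition ordinary_retraction :: "'a set \<Rightarrow> ('a \<Rightarrow> 'a \<Rightarrow> enat) \<Rightarrow> 'a set \<Rightarrow> ('a word set \<Rightarrow> 'a word set) \<Rightarrow> bool" where
  "ordinary_retraction S M X \<phi> \<longleftrightarrow>
     retraction S M X \<phi> \<and>
     (\<forall>x\<in>X. \<phi> (artin_gen S M x) = artin_gen S M x) \<and>
     (\<forall>y\<in>S - X. \<phi> (artin_gen S M y) \<in> artin_gen S M ` X \<union> {\<one>\<^bsub>artin_group S M\<^esub>})"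

end

theory Submission
  imports Defs
begin


lemma wo_append[simp]: "words_on S (a @ b) \<longleftrightarrow> words_on S a \<and> words_on S b"
  by (auto simp: words_on_def)
lemma wo_Cons[simp]: "words_on S (p # w) \<longleftrightarrow> snd p \<in> S \<and> words_on S w"
  by (auto simp: words_on_def)
lemma wo_Nil[simp]: "words_on S []"
  by (auto simp: words_on_def)
lemma wo_mono: "words_on X w \<Longrightarrow> X \<subseteq> S \<Longrightarrow> words_on S w"
  by (auto simp: words_on_def)
lemma wo_alt: "s \<in> S \<Longrightarrow> t \<in> S \<Longrightarrow> words_on S (alt_word s t n)"
  by (induction n arbitrary: s t) auto

lemma step_words: "artin_step S M a b \<Longrightarrow> words_on S a \<and> words_on S b"
  by (induction rule: artin_step.induct) (auto simp: wo_alt)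

lemma equiv_words: "artin_equiv S M a b \<Longrightarrow> a = b \<or> (words_on S a \<and> words_on S b)"
  unfolding artin_equiv_def
  by (induction rule: equivclp_induct) (auto dest: step_words)

lemma eq_refl[simp]: "artin_equiv S M a a"
  by (simp add: artin_equiv_def)
lemma eq_sym: "artin_equiv S M a b \<Longrightarrow> artin_equiv S M b a"
  unfolding artin_equiv_def by (rule equivclp_sym)
lemma eq_trans: "artin_equiv S M a b \<Longrightarrow> artin_equiv S M b c \<Longrightarrow> artin_equiv S M a c"
  unfolding artin_equiv_def by (rule equivclp_trans)
lemma eq_step: "artin_step S M a b \<Longrightarrow> artin_equiv S M a b"
  unfolding artin_equiv_def by blast

lemma step_ctx: "artin_step S M a b \<Longrightarrow> words_on S u \<Longrightarrow> words_on S v \<Longrightarrow>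
   artin_step S M (u @ a @ v) (u @ b @ v)"
proof (induction rule: artin_step.induct)
  case (cancel u' v' s b)
  then show ?case using artin_step.cancel[of S "u@u'" "v'@v" s M b] by simp
next
  case (braid u' v' s t m)
  then show ?case using artin_step.braid[of S "u@u'" "v'@v" s t M m] by simp
qed

lemma equiv_ctx: "artin_equiv S M a b \<Longrightarrow> words_on S u \<Longrightarrow> words_on S v \<Longrightarrow>
   artin_equiv S M (u @ a @ v) (u @ b @ v)"
  unfolding artin_equiv_def
proof (induction rule: equivclp_induct)
  case base
  then show ?case by simp
next
  case (step y z)
  then have "artin_step S M (u @ y @ v) (u @ z @ v) \<or> artin_step S M (u @ z @ v) (u @ y @ v)"
    using step_ctx by blast
  then show ?case using step equivclp_into_equivclp by metis
qed

lemma equiv_append: "artin_equiv S M a a' \<Longrightarrow> artin_equiv S M b b' \<Longrightarrow> words_on S a' \<Longrightarrow> words_on S b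
  \<Longrightarrow> artin_equiv S M (a @ b) (a' @ b')"
  using equiv_ctx[of S M a a' "[]" b] equiv_ctx[of S M b b' a' "[]"] eq_trans by fastforce

lemma class_eq: "artin_equiv S M a b \<Longrightarrow> artin_class S M a = artin_class S M b"
  unfolding artin_class_def using eq_sym eq_trans by blast

lemma mem_class: "words_on S a \<Longrightarrow> a \<in> artin_class S M a"
  unfolding artin_class_def by simp

lemma some_class: "words_on S a \<Longrightarrow> words_on S (SOME u. u \<in> artin_class S M a) \<and>
   artin_equiv S M a (SOME u. u \<in> artin_class S M a)"
proof -
  assume "words_on S a"
  then have "(SOME u. u \<in> artin_class S M a) \<in> artin_class S M a"
    by (meson mem_class someI)
  then show ?thesis unfolding artin_class_def by simp
qed

lemma mult_class: "words_on S a \<Longrightarrow> words_on S b \<Longrightarrow>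
   artin_class S M a \<otimes>\<^bsub>artin_group S M\<^esub> artin_class S M b = artin_class S M (a @ b)"
proof -
  assume a: "words_on S a" and b: "words_on S b"
  define u where "u = (SOME u. u \<in> artin_class S M a)"
  define v where "v = (SOME u. u \<in> artin_class S M b)"
  have u: "words_on S u" "artin_equiv S M a u" using some_class[OF a] u_def by auto
  have v: "words_on S v" "artin_equiv S M b v" using some_class[OF b] v_def by auto
  have "artin_equiv S M (a @ b) (u @ v)" using equiv_append u v b by blast
  then have "artin_class S M (u @ v) = artin_class S M (a @ b)" using class_eq eq_sym by metis
  then show ?thesis unfolding artin_group_def u_def v_def by simp
qed

lemma carrier_ag: "carrier (artin_group S M) = artin_class S M ` {w. words_on S w}"
  by (simp add: artin_group_def)
lemma one_ag: "\<one>\<^bsub>artin_group S M\<^esub> = artin_class S M []"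
  by (simp add: artin_group_def)

lemma monoid_ag: "monoid (artin_group S M)"
proof (rule monoidI)
  fix x y assume "x \<in> carrier (artin_group S M)" "y \<in> carrier (artin_group S M)"
  then show "x \<otimes>\<^bsub>artin_group S M\<^esub> y \<in> carrier (artin_group S M)"
    unfolding carrier_ag using mult_class by fastforce
next
  show "\<one>\<^bsub>artin_group S M\<^esub> \<in> carrier (artin_group S M)" unfolding carrier_ag one_ag by auto
next
  fix x y z assume "x \<in> carrier (artin_group S M)" "y \<in> carrier (artin_group S M)" "z \<in> carrier (artin_group S M)"
  then show "x \<otimes>\<^bsub>artin_group S M\<^esub> y \<otimes>\<^bsub>artin_group S M\<^esub> z =
           x \<otimes>\<^bsub>artin_group S M\<^esub> (y \<otimes>\<^bsub>artin_group S M\<^esub> z)"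
    unfolding carrier_ag by (auto simp: mult_class)
next
  fix x assume "x \<in> carrier (artin_group S M)"
  then show "\<one>\<^bsub>artin_group S M\<^esub> \<otimes>\<^bsub>artin_group S M\<^esub> x = x"
    unfolding carrier_ag one_ag by (auto simp: mult_class)
next
  fix x assume "x \<in> carrier (artin_group S M)"
  then show "x \<otimes>\<^bsub>artin_group S M\<^esub> \<one>\<^bsub>artin_group S M\<^esub> = x"
    unfolding carrier_ag one_ag by (auto simp: mult_class)
qed

lemma inv_gen: "s \<in> S \<Longrightarrow> inv\<^bsub>artin_group S M\<^esub> (artin_gen S M s) = artin_class S M [(False, s)]"
proof -
  assume s: "s \<in> S"
  have c1: "artin_class S M [(True, s), (False, s)] = artin_class S M []"
    using artin_step.cancel[of S "[]" "[]" s M True] s by (simp add: class_eq eq_step)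
  have c2: "artin_class S M [(False, s), (True, s)] = artin_class S M []"
    using artin_step.cancel[of S "[]" "[]" s M False] s by (simp add: class_eq eq_step)
  show ?thesis
    apply (rule sym, rule monoid.inv_unique'[OF monoid_ag])
    using s c1 c2 by (auto simp: carrier_ag artin_gen_def mult_class one_ag)
qed



definition sb :: "'a \<Rightarrow> 'a \<Rightarrow> 'a word \<Rightarrow> 'a word" where
  "sb x y = map (\<lambda>p. (fst p, if snd p = x then y else snd p))"

lemma sb_append[simp]: "sb x y (a @ b) = sb x y a @ sb x y b"
  by (simp add: sb_def)
lemma sb_Cons[simp]: "sb x y ((b, s) # w) = (b, if s = x then y else s) # sb x y w"
  by (simp add: sb_def)
lemma sb_Nil[simp]: "sb x y [] = []"
  by (simp add: sb_def)
lemma sb_alt: "sb x y (alt_word s t n) =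
   alt_word (if s = x then y else s) (if t = x then y else t) n"
  by (induction n arbitrary: s t) auto
lemma sb_id: "words_on (S - {x}) w \<Longrightarrow> sb x y w = w"
  by (induction w) auto
lemma sb_words: "words_on S w \<Longrightarrow> y \<in> S \<Longrightarrow> words_on S (sb x y w)"
  by (induction w) auto
lemma sb_words2: "words_on S w \<Longrightarrow> y \<in> S \<Longrightarrow> y \<noteq> x \<Longrightarrow> words_on (S - {x}) (sb x y w)"
  by (induction w) auto

lemma alt_split: "alt_word s t (k + n) =
   alt_word s t k @ (if even k then alt_word s t n else alt_word t s n)"
  by (induction k arbitrary: s t) auto

lemma braid_pow:
  assumes "s \<in> S" "t \<in> S" "s \<noteq> t" "M s t = enat k" "odd k"
  shows "artin_equiv S M (alt_word s t (i * k)) (alt_word t s (i * k))"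
proof (induction i)
  case 0
  then show ?case by simp
next
  case (Suc i)
  have b: "artin_equiv S M (alt_word s t k) (alt_word t s k)"
    using artin_step.braid[of S "[]" "[]" s t M k] assms by (simp add: eq_step)
  have "artin_equiv S M (alt_word s t k @ alt_word t s (i * k)) (alt_word t s k @ alt_word s t (i * k))"
    using equiv_append[OF b eq_sym[OF Suc]] assms wo_alt by metis
  then show ?case using assms(5) by (simp add: alt_split)
qed

lemma sb_step:
  assumes cm: "coxeter_matrix S M" and rc: "retract_compatible S M"
    and xS: "x \<in> S" and yS: "y \<in> S" and yx: "y \<noteq> x"
    and H: "\<forall>z\<in>S. z \<noteq> x \<longrightarrow> z \<noteq> y \<longrightarrow> the_enat (M y z) dvd the_enat (M x z)"
    and st: "artin_step S M a b"
  shows "artin_equiv S M (sb x y a) (sb x y b)"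
  using st
proof (induction rule: artin_step.induct)
  case (cancel u v s b)
  have "artin_step S M (sb x y u @ [(b, if s = x then y else s), (\<not> b, if s = x then y else s)] @ sb x y v)
         (sb x y u @ sb x y v)"
    by (rule artin_step.cancel) (use cancel yS in \<open>auto simp: sb_words\<close>)
  then show ?case by (simp add: eq_step)
next
  case (braid u v s t m)
  let ?g = "\<lambda>q. if q = x then y else q"
  have core: "artin_equiv S M (alt_word (?g s) (?g t) m) (alt_word (?g t) (?g s) m)"
    if ss: "s \<in> S" "t \<in> S" "s \<noteq> t" "M s t = enat m" for s t
  proof (cases "?g s = ?g t")
    case True then show ?thesis by simp
  next
    case False
    show ?thesis
    proof (cases "s = x \<or> t = x")
      case False
      then show ?thesis using artin_step.braid[of S "[]" "[]" s t M m] ss by (simp add: eq_step)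
    next
      case True
      have gen: "artin_equiv S M (alt_word y z m) (alt_word z y m)"
        if z: "z \<in> S" "z \<noteq> x" "z \<noteq> y" "M x z = enat m" for z
      proof -
        obtain k where k: "M y z = enat k" "odd k" using rc yS z unfolding retract_compatible_def by blast
        obtain m' where m': "M x z = enat m'" "odd m'" using rc xS z unfolding retract_compatible_def by blast
        have "k dvd m" using H z k m' by (metis the_enat.simps)
        then obtain i where "m = i * k" by (metis dvd_def mult.commute)
        then show ?thesis using braid_pow[of y S z M k i] k yS z by simp
      qed
      show ?thesis
      proof (cases "s = x")
        case True
        then have "t \<noteq> x" "t \<noteq> y" using ss False by auto
        then show ?thesis using gen[of t] True ss by simp
      next
        case sx: False
        then have tx: "t = x" using True by simp
        then have "s \<noteq> y" using False sx by auto
        moreover have "M x s = enat m" using cm ss tx unfolding coxeter_matrix_def by metis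
        ultimately show ?thesis using gen[of s] tx sx ss eq_sym by simp
      qed
    qed
  qed
  have "artin_equiv S M (sb x y u @ alt_word (?g s) (?g t) m @ sb x y v) (sb x y u @ alt_word (?g t) (?g s) m @ sb x y v)"
    by (rule equiv_ctx[OF core]) (use braid yS in \<open>auto simp: sb_words\<close>)
  then show ?case by (simp add: sb_alt)
qed

lemma sb_equiv:
  assumes cm: "coxeter_matrix S M" and rc: "retract_compatible S M"
    and xS: "x \<in> S" and yS: "y \<in> S" and yx: "y \<noteq> x"
    and H: "\<forall>z\<in>S. z \<noteq> x \<longrightarrow> z \<noteq> y \<longrightarrow> the_enat (M y z) dvd the_enat (M x z)"
    and e: "artin_equiv S M a b"
  shows "artin_equiv S M (sb x y a) (sb x y b)"
  using e unfolding artin_equiv_def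
proof (induction rule: equivclp_induct)
  case base then show ?case by simp
next
  case (step p q)
  then show ?case using sb_step[OF cm rc xS yS yx H] eq_sym eq_trans unfolding artin_equiv_def by metis
qed



lemma tri:
  fixes nxy nxz nyz :: nat
  assumes "nxy > 0" "nxz > 0" "nyz > 0" "nxy \<le> nxz"
    and "(nxy = nxz \<and> nyz dvd nxy) \<or> (nxy = nyz \<and> nxz dvd nxy) \<or> (nxz = nyz \<and> nxy dvd nxz)"
  shows "nyz dvd nxz"
proof -
  consider (a) "nxy = nxz \<and> nyz dvd nxy" | (b) "nxy = nyz \<and> nxz dvd nxy" | (c) "nxz = nyz \<and> nxy dvd nxz"
    using assms(5) by blast
  then show ?thesis
  proof cases
    case a then show ?thesis by auto
  next
    case b
    then have "nxz \<le> nxy" using dvd_imp_le assms(1) by blast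
    then have "nxz = nyz" using b assms(4) by simp
    then show ?thesis by simp
  next
    case c then show ?thesis by auto
  qed
qed

lemma perm3:
  assumes "x \<noteq> y" "x \<noteq> z" "y \<noteq> z" "{a, b, c} = {x, y, z}"
  shows "(a = x \<and> b = y \<and> c = z) \<or> (a = x \<and> b = z \<and> c = y) \<or> (a = y \<and> b = x \<and> c = z) \<or>
         (a = y \<and> b = z \<and> c = x) \<or> (a = z \<and> b = x \<and> c = y) \<or> (a = z \<and> b = y \<and> c = x)"
proof -
  have "a \<in> {x,y,z}" "b \<in> {x,y,z}" "c \<in> {x,y,z}" using assms(4) by auto
  moreover have "x \<in> {a,b,c}" "y \<in> {a,b,c}" "z \<in> {a,b,c}" using assms(4) by auto
  ultimately show ?thesis using assms(1-3) by auto
qed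

lemma choose_y:
  assumes fin: "finite S" and c2: "card S \<ge> 2" and cm: "coxeter_matrix S M"
    and rc: "retract_compatible S M" and xS: "x \<in> S"
  shows "\<exists>y\<in>S. y \<noteq> x \<and> (\<forall>z\<in>S. z \<noteq> x \<longrightarrow> z \<noteq> y \<longrightarrow> the_enat (M y z) dvd the_enat (M x z))"
proof -
  have "S - {x} \<noteq> {}"
  proof
    assume "S - {x} = {}"
    then have "S \<subseteq> {x}" by auto
    then have "card S \<le> card {x}" by (intro card_mono) auto
    then have "card S \<le> 1" by simp
    then show False using c2 by simp
  qed
  then obtain y0 where "y0 \<in> S - {x}" by blast
  then obtain y where y: "y \<in> S - {x}" and ymin: "\<forall>z. z \<in> S - {x} \<longrightarrow> the_enat (M x y) \<le> the_enat (M x z)"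
    using ex_has_least_nat[of "\<lambda>z. z \<in> S - {x}" y0 "\<lambda>z. the_enat (M x z)"] by blast
  have N: "\<And>p q. p \<in> S \<Longrightarrow> q \<in> S \<Longrightarrow> \<exists>n. M p q = enat n \<and> odd n"
  proof -
    have "\<forall>s\<in>S. \<forall>t\<in>S. \<exists>n. M s t = enat n \<and> odd n"
      using rc unfolding retract_compatible_def by (rule conjunct1)
    then show "\<And>p q. p \<in> S \<Longrightarrow> q \<in> S \<Longrightarrow> \<exists>n. M p q = enat n \<and> odd n" by blast
  qed
  have sym: "\<And>p q. p \<in> S \<Longrightarrow> q \<in> S \<Longrightarrow> M p q = M q p"
  proof -
    have C: "\<forall>s\<in>S. \<forall>t\<in>S. s \<noteq> t \<longrightarrow> M s t = M t s \<and> M s t \<ge> 2"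
      using cm unfolding coxeter_matrix_def by (rule conjunct2)
    fix p q assume "p \<in> S" "q \<in> S"
    then show "M p q = M q p" using C by (cases "p = q") auto
  qed
  have pos: "\<And>p q. p \<in> S \<Longrightarrow> q \<in> S \<Longrightarrow> the_enat (M p q) > 0"
  proof -
    fix p q assume "p \<in> S" "q \<in> S"
    then obtain n where "M p q = enat n" "odd n" using N by blast
    then show "the_enat (M p q) > 0" by (simp add: odd_pos)
  qed
  show ?thesis
  proof (intro bexI conjI ballI impI)
    show "y \<in> S" "y \<noteq> x" using y by auto
    fix z assume z: "z \<in> S" "z \<noteq> x" "z \<noteq> y"
    obtain a b c where abc: "{a, b, c} = {x, y, z}" "M a b = M a c" "the_enat (M b c) dvd the_enat (M a b)"
    proof -
      have R: "\<forall>a\<in>S. \<forall>b\<in>S. \<forall>c\<in>S. a \<noteq> b \<and> a \<noteq> c \<and> b \<noteq> c \<longrightarrow>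
        (\<exists>a' b' c'. {a', b', c'} = {a, b, c} \<and>
           M a' b' = M a' c' \<and> the_enat (M b' c') dvd the_enat (M a' b'))"
        using rc unfolding retract_compatible_def by (rule conjunct2)
      have yS: "y \<in> S" using y by auto
      have d: "x \<noteq> y \<and> x \<noteq> z \<and> y \<noteq> z" using y z by auto
      have "\<exists>a' b' c'. {a', b', c'} = {x, y, z} \<and>
           M a' b' = M a' c' \<and> the_enat (M b' c') dvd the_enat (M a' b')"
        using R[rule_format, OF xS yS z(1) d] .
      then show ?thesis by (meson that)
    qed
    have "x \<noteq> y" using y by auto
    then have P: "(a = x \<and> b = y \<and> c = z) \<or> (a = x \<and> b = z \<and> c = y) \<or> (a = y \<and> b = x \<and> c = z) \<or>
         (a = y \<and> b = z \<and> c = x) \<or> (a = z \<and> b = x \<and> c = y) \<or> (a = z \<and> b = y \<and> c = x)"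
      using z abc(1) by (intro perm3) auto
    have s1: "M y x = M x y" "M z x = M x z" "M z y = M y z" using sym[of y x] sym[of z x] sym[of z y] xS y z by auto
    have le: "the_enat (M x y) \<le> the_enat (M x z)" using ymin z by auto
    have "(the_enat (M x y) = the_enat (M x z) \<and> the_enat (M y z) dvd the_enat (M x y)) \<or>
          (the_enat (M x y) = the_enat (M y z) \<and> the_enat (M x z) dvd the_enat (M x y)) \<or>
          (the_enat (M x z) = the_enat (M y z) \<and> the_enat (M x y) dvd the_enat (M x z))"
      using P abc(2,3) s1 by (elim disjE conjE; simp)
    then show "the_enat (M y z) dvd the_enat (M x z)"
      using tri[OF pos[of x y] pos[of x z] pos[of y z] le] xS y z by simp
  qed
qed

lemma par_sub:
  assumes "X \<subseteq> S"
  shows "parabolic S M X \<subseteq> artin_class S M ` {w. words_on X w}"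
proof
  fix a assume "a \<in> parabolic S M X"
  then show "a \<in> artin_class S M ` {w. words_on X w}"
    unfolding parabolic_def
  proof (induction rule: generate.induct)
    case one
    then show ?case by (auto simp: one_ag)
  next
    case (incl h)
    then obtain s where "s \<in> X" "h = artin_class S M [(True, s)]" by (auto simp: artin_gen_def)
    then show ?case by (intro image_eqI[of _ _ "[(True, s)]"]) auto
  next
    case (inv h)
    then obtain s where s: "s \<in> X" "h = artin_gen S M s" by auto
    have sS: "s \<in> S" using s assms by auto
    have "inv\<^bsub>artin_group S M\<^esub> h = artin_class S M [(False, s)]" using inv_gen[OF sS, of M] s(2) by simp
    then show ?case using s by (intro image_eqI[of _ _ "[(False, s)]"]) auto
  next
    case (eng h1 h2)
    then obtain u v where "words_on X u" "words_on X v" "h1 = artin_class S M u" "h2 = artin_class S M v"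
      by auto
    moreover have "words_on S u" "words_on S v" using calculation assms wo_mono by blast+
    ultimately show ?case using mult_class[of S u v M] by (intro image_eqI[of _ _ "u @ v"]) auto
  qed
qed

lemma sub_par:
  assumes "X \<subseteq> S"
  shows "words_on X w \<Longrightarrow> artin_class S M w \<in> parabolic S M X"
proof (induction w)
  case Nil
  then show ?case unfolding parabolic_def using generate.one[of "artin_group S M"] by (simp add: one_ag)
next
  case (Cons p w)
  obtain b s where p: "p = (b, s)" by (cases p)
  have sX: "s \<in> X" and wX: "words_on X w" using Cons.prems p by auto
  have sS: "s \<in> S" using sX assms by auto
  have wS: "words_on S w" using wX assms wo_mono by blast
  have g: "artin_class S M [(b, s)] \<in> parabolic S M X"
  proof (cases b)
    case True
    then show ?thesis unfolding parabolic_def using generate.incl[of "artin_gen S M s" "artin_gen S M ` X"] sX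
      by (simp add: artin_gen_def)
  next
    case False
    have "inv\<^bsub>artin_group S M\<^esub> (artin_gen S M s) \<in> generate (artin_group S M) (artin_gen S M ` X)"
      by (rule generate.inv) (use sX in auto)
    then show ?thesis unfolding parabolic_def using inv_gen[OF sS, of M] False by simp
  qed
  have "artin_class S M (p # w) = artin_class S M [(b, s)] \<otimes>\<^bsub>artin_group S M\<^esub> artin_class S M w"
    using mult_class[of S "[(b, s)]" w M] sS wS p by simp
  then show ?case using g Cons.IH[OF wX] unfolding parabolic_def by (simp add: generate.eng)
qed

theorem lemma3p9:
  fixes S :: "'a set" and M :: "'a \<Rightarrow> 'a \<Rightarrow> enat" and x :: 'a
  assumes "finite S" and "card S \<ge> 2"
    and "coxeter_matrix S M" and "retract_compatible S M"
    and "x \<in> S"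
  shows "\<exists>\<psi>. ordinary_retraction S M (S - {x}) \<psi> \<and>
             \<psi> (artin_gen S M x) \<in> artin_gen S M ` (S - {x})"
proof -
  note cm = assms(3) and rc = assms(4) and xS = assms(5)
  obtain y where yS: "y \<in> S" and yx: "y \<noteq> x"
    and H: "\<forall>z\<in>S. z \<noteq> x \<longrightarrow> z \<noteq> y \<longrightarrow> the_enat (M y z) dvd the_enat (M x z)"
    using choose_y[OF assms] by blast
  define X where "X = S - {x}"
  have XS: "X \<subseteq> S" unfolding X_def by auto
  define \<psi> where "\<psi> A = artin_class S M (sb x y (SOME u. u \<in> A))" for A
  have psi_class: "\<psi> (artin_class S M w) = artin_class S M (sb x y w)" if w: "words_on S w" for w
  proof -
    have "artin_equiv S M w (SOME u. u \<in> artin_class S M w)" using some_class[OF w] by blast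
    then have "artin_equiv S M (sb x y w) (sb x y (SOME u. u \<in> artin_class S M w))"
      by (rule sb_equiv[OF cm rc xS yS yx H])
    then show ?thesis unfolding \<psi>_def using class_eq by metis
  qed
  have hom: "\<psi> \<in> hom (artin_group S M) (artin_group S M)"
  proof (rule homI)
    fix A assume "A \<in> carrier (artin_group S M)"
    then obtain w where "words_on S w" "A = artin_class S M w" by (auto simp: carrier_ag)
    moreover have "words_on S (sb x y w)" by (rule sb_words[OF calculation(1) yS])
    ultimately show "\<psi> A \<in> carrier (artin_group S M)" using psi_class unfolding carrier_ag by simp
  next
    fix A B assume "A \<in> carrier (artin_group S M)" "B \<in> carrier (artin_group S M)"
    then obtain u v where uv: "words_on S u" "A = artin_class S M u" "words_on S v" "B = artin_class S M v"
      by (auto simp: carrier_ag)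
    then show "\<psi> (A \<otimes>\<^bsub>artin_group S M\<^esub> B) = \<psi> A \<otimes>\<^bsub>artin_group S M\<^esub> \<psi> B"
    proof -
      have su: "words_on S (sb x y u)" "words_on S (sb x y v)" using sb_words[OF uv(1) yS] sb_words[OF uv(3) yS] by auto
      have "A \<otimes>\<^bsub>artin_group S M\<^esub> B = artin_class S M (u @ v)" using mult_class uv by metis
      then have "\<psi> (A \<otimes>\<^bsub>artin_group S M\<^esub> B) = artin_class S M (sb x y u @ sb x y v)"
        using psi_class[of "u @ v"] uv by simp
      also have "\<dots> = artin_class S M (sb x y u) \<otimes>\<^bsub>artin_group S M\<^esub> artin_class S M (sb x y v)"
        by (rule mult_class[symmetric]) (use su in auto)
      also have "\<dots> = \<psi> A \<otimes>\<^bsub>artin_group S M\<^esub> \<psi> B" using psi_class uv by simp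
      finally show ?thesis .
    qed
  qed
  have img: "\<psi> ` carrier (artin_group S M) \<subseteq> parabolic S M X"
  proof
    fix B assume "B \<in> \<psi> ` carrier (artin_group S M)"
    then obtain w where w: "words_on S w" "B = \<psi> (artin_class S M w)" by (auto simp: carrier_ag)
    then have "B = artin_class S M (sb x y w)" using psi_class by simp
    moreover have "words_on X (sb x y w)" unfolding X_def by (rule sb_words2[OF w(1) yS yx])
    ultimately show "B \<in> parabolic S M X" using sub_par[OF XS] by simp
  qed
  have fix_par: "\<forall>a\<in>parabolic S M X. \<psi> a = a"
  proof
    fix a assume "a \<in> parabolic S M X"
    then obtain w where w: "words_on X w" "a = artin_class S M w" using par_sub[OF XS] by blast
    have "words_on S w" by (rule wo_mono[OF w(1) XS])
    then show "\<psi> a = a" using w psi_class sb_id[of S x w y] unfolding X_def by simp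
  qed
  have fixX: "\<forall>z\<in>X. \<psi> (artin_gen S M z) = artin_gen S M z"
    using psi_class XS unfolding artin_gen_def X_def by auto
  have gx: "\<psi> (artin_gen S M x) = artin_gen S M y"
    using psi_class xS yS unfolding artin_gen_def by simp
  have yX: "y \<in> X" using yS yx unfolding X_def by simp
  have ret: "retraction S M X \<psi>" unfolding retraction_def using hom img fix_par by blast
  have SX: "S - X = {x}" unfolding X_def using xS by blast
  have gxX: "\<psi> (artin_gen S M x) \<in> artin_gen S M ` X" using gx yX by blast
  have "ordinary_retraction S M X \<psi>"
    unfolding ordinary_retraction_def
  proof (intro conjI ballI)
    show "retraction S M X \<psi>" by (rule ret)
  next
    fix z assume "z \<in> X"
    show "\<psi> (artin_gen S M z) = artin_gen S M z" using bspec[OF fixX \<open>z \<in> X\<close>] .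
  next
    fix z assume "z \<in> S - X"
    then have "z = x" using SX by simp
    then show "\<psi> (artin_gen S M z) \<in> artin_gen S M ` X \<union> {\<one>\<^bsub>artin_group S M\<^esub>}"
      using gxX by simp
  qed
  then show ?thesis using gxX unfolding X_def by blast
qed

end
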